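(* In the single-period model described in the context, with short sales prohibitions (admissible strategies satisfy $h_0\in\mathbb{R}$, $h_m\ge 0$ for $m=1,\dots,M$), if there is no arbitrage under model uncertainty, then there exists a weak risk neutral nonlinear expectation, i.e. a nonempty family $\mathcal{Q}$ of probability measures on $\Omega$ such that $\sup_{Q\in\mathcal{Q}}Q(\omega)>0$ for all $\omega\in\Omega$ and $\inf_{Q\in\mathcal{Q}}E_Q[\Delta S_m^*]\le 0$ for all $m=1,\dots,M$.
   Context: Single-period model: $\Omega=\{\omega_1,\dots,\omega_K\}$ is a finite sample space with all subsets measurable. $\mathcal{P}$ is a nonempty family of probability measures on $\Omega$ with $\sup_{P\in\mathcal{P}}P(\omega)>0$ for every $\omega\in\Omega$. There is a bond with $S_0(0)=1$, $S_0(1)=1+r$, $r\ge 0$ a constant, and $M$ risky securities with known initial prices $S_m(0)>0$ and random terminal prices $S_m(1):\Omega\to\mathbb{R}$, $m=1,\dots,M$. Discounted prices: $S_m^*(t)=S_m(t)/S_0(t)$, $t=0,1$, and $\Delta S_m^*=S_m^*(1)-S_m^*(0)$. For a trading strategy $h=(h_0,\dots,h_M)$, the discounted portfolio value is $V_t^*=h_0+\sum_{m=1}^M h_m S_m^*(t)$, $t=0,1$. A trading strategy is an arbitrage under model uncertainty if (i) $V_0^*=0$ and (ii) $V_1^*(\omega)\ge 0$ for all $\omega\in\Omega$ and $\sup_{P\in\mathcal{P}}E_P[V_1^*]>0$. "No arbitrage under model uncertainty" means no admissible trading strategy is an arbitrage under model uncertainty. *)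

theory Defs
  imports "HOL-Analysis.Analysis"
begin

text \<open>Finite sample space: a finite type 'w (all subsets measurable).
  A probability measure on it is represented by its point masses.\<close>

definition prob_measure :: "('w::finite \<Rightarrow> real) \<Rightarrow> bool" where
  "prob_measure P \<longleftrightarrow> (\<forall>w. 0 \<le> P w) \<and> (\<Sum>w\<in>UNIV. P w) = 1"

definition expect :: "('w::finite \<Rightarrow> real) \<Rightarrow> ('w \<Rightarrow> real) \<Rightarrow> real" where
  "expect P X = (\<Sum>w\<in>UNIV. P w * X w)"

text \<open>Discounted prices: S0 m = S_m(0) (bond price at 0 is 1), S1 m w = S_m(1)(w).\<close>

definition disc1 :: "real \<Rightarrow> (nat \<Rightarrow> 'w \<Rightarrow> real) \<Rightarrow> nat \<Rightarrow> 'w \<Rightarrow> real" where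
  "disc1 r S1 m w = S1 m w / (1 + r)"

definition dS :: "real \<Rightarrow> (nat \<Rightarrow> real) \<Rightarrow> (nat \<Rightarrow> 'w \<Rightarrow> real) \<Rightarrow> nat \<Rightarrow> 'w \<Rightarrow> real" where
  "dS r S0 S1 m w = disc1 r S1 m w - S0 m"

definition V0 :: "nat \<Rightarrow> (nat \<Rightarrow> real) \<Rightarrow> (nat \<Rightarrow> real) \<Rightarrow> real" where
  "V0 M S0 h = h 0 + (\<Sum>m=1..M. h m * S0 m)"

definition V1 :: "nat \<Rightarrow> real \<Rightarrow> (nat \<Rightarrow> 'w \<Rightarrow> real) \<Rightarrow> (nat \<Rightarrow> real) \<Rightarrow> 'w \<Rightarrow> real" where
  "V1 M r S1 h w = h 0 + (\<Sum>m=1..M. h m * disc1 r S1 m w)"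

definition admissible :: "nat \<Rightarrow> (nat \<Rightarrow> real) \<Rightarrow> bool" where
  "admissible M h \<longleftrightarrow> (\<forall>m\<in>{1..M}. 0 \<le> h m)"

definition arbitrage_MU ::
  "('w::finite \<Rightarrow> real) set \<Rightarrow> nat \<Rightarrow> real \<Rightarrow> (nat \<Rightarrow> real) \<Rightarrow> (nat \<Rightarrow> 'w \<Rightarrow> real) \<Rightarrow> (nat \<Rightarrow> real) \<Rightarrow> bool" where
  "arbitrage_MU \<P> M r S0 S1 h \<longleftrightarrow>
     V0 M S0 h = 0 \<and> (\<forall>w. 0 \<le> V1 M r S1 h w) \<and>
     (SUP P\<in>\<P>. expect P (V1 M r S1 h)) > 0"

definition no_arbitrage_MU ::
  "('w::finite \<Rightarrow> real) set \<Rightarrow> nat \<Rightarrow> real \<Rightarrow> (nat \<Rightarrow> real) \<Rightarrow> (nat \<Rightarrow> 'w \<Rightarrow> real) \<Rightarrow> bool" where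
  "no_arbitrage_MU \<P> M r S0 S1 \<longleftrightarrow>
     (\<forall>h. admissible M h \<longrightarrow> \<not> arbitrage_MU \<P> M r S0 S1 h)"

definition weak_risk_neutral ::
  "('w::finite \<Rightarrow> real) set \<Rightarrow> nat \<Rightarrow> real \<Rightarrow> (nat \<Rightarrow> real) \<Rightarrow> (nat \<Rightarrow> 'w \<Rightarrow> real) \<Rightarrow> bool" where
  "weak_risk_neutral \<Q> M r S0 S1 \<longleftrightarrow>
     \<Q> \<noteq> {} \<and> (\<forall>Q\<in>\<Q>. prob_measure Q) \<and>
     (\<forall>w. (SUP Q\<in>\<Q>. Q w) > 0) \<and>
     (\<forall>m\<in>{1..M}. (INF Q\<in>\<Q>. expect Q (dS r S0 S1 m)) \<le> 0)"

end

theory Submission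
  imports Defs
begin

lemma sum_single_if:
  fixes f :: "nat \<Rightarrow> real"
  assumes "m \<in> {1..M}"
  shows "(\<Sum>i=1..M. (if i = 0 then a else if i = m then 1 else 0) * f i) = f m"
proof -
  have "(\<Sum>i=1..M. (if i = 0 then a else if i = m then 1 else 0) * f i)
        = (\<Sum>i=1..M. if i = m then f i else 0)"
    by (rule sum.cong) auto
  also have "\<dots> = f m" using assms by (simp add: sum.delta)
  finally show ?thesis .
qed

theorem mainTheorem3:
  fixes \<P> :: "('w::finite \<Rightarrow> real) set"
    and M :: nat and r :: real
    and S0 :: "nat \<Rightarrow> real" and S1 :: "nat \<Rightarrow> 'w \<Rightarrow> real"
  assumes "\<P> \<noteq> {}"
    and "\<forall>P\<in>\<P>. prob_measure P"
    and "\<forall>w. (SUP P\<in>\<P>. P w) > 0"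
    and "r \<ge> 0"
    and "\<forall>m\<in>{1..M}. S0 m > 0"
    and "no_arbitrage_MU \<P> M r S0 S1"
  shows "\<exists>\<Q>. weak_risk_neutral \<Q> M r S0 S1"
proof -
  define \<delta> :: "'w \<Rightarrow> 'w \<Rightarrow> real" where "\<delta> w = (\<lambda>v. if v = w then 1 else 0)" for w
  have expd: "expect (\<delta> w) X = X w" for w X
    unfolding expect_def \<delta>_def by (simp add: if_distrib[of "\<lambda>c. c * _"] sum.delta cong: if_cong)
  have pm: "prob_measure (\<delta> w)" for w
    unfolding prob_measure_def \<delta>_def by (simp add: sum.delta)
  have neg: "\<exists>w. dS r S0 S1 m w \<le> 0" if m: "m \<in> {1..M}" for m
  proof (rule ccontr)
    assume "\<not> ?thesis"
    hence pos: "\<forall>w. dS r S0 S1 m w > 0" by (meson not_le)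
    define h :: "nat \<Rightarrow> real" where "h = (\<lambda>i. if i = 0 then - S0 m else if i = m then 1 else 0)"
    have adm: "admissible M h" unfolding admissible_def h_def by auto
    have v0: "V0 M S0 h = 0"
      unfolding V0_def h_def using sum_single_if[OF m, of "- S0 m" S0] by simp
    have v1: "V1 M r S1 h w = dS r S0 S1 m w" for w
      unfolding V1_def h_def dS_def
      using sum_single_if[OF m, of "- S0 m" "\<lambda>i. disc1 r S1 i w"] by simp
    obtain P where P: "P \<in> \<P>" using assms(1) by auto
    have pmP: "prob_measure P" using P assms(2) by auto
    have epos: "expect P (V1 M r S1 h) > 0"
    proof -
      have nn: "\<forall>w. 0 \<le> P w" and s1: "(\<Sum>w\<in>UNIV. P w) = 1" using pmP unfolding prob_measure_def by auto
      obtain w0 where "P w0 \<noteq> 0" using s1 by (metis sum.neutral zero_neq_one)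
      hence pw0: "P w0 > 0" using nn[rule_format, of w0] by linarith
      have "0 < P w0 * V1 M r S1 h w0" using pw0 pos v1 by simp
      also have "\<dots> \<le> (\<Sum>w\<in>UNIV. P w * V1 M r S1 h w)"
        by (rule member_le_sum) (use nn pos v1 in \<open>simp_all add: less_imp_le\<close>)
      finally show ?thesis unfolding expect_def .
    qed
    define B where "B = (\<Sum>w\<in>UNIV. \<bar>V1 M r S1 h w\<bar>)"
    have bdd: "bdd_above ((\<lambda>P. expect P (V1 M r S1 h)) ` \<P>)"
    proof (rule bdd_aboveI2)
      fix Q assume "Q \<in> \<P>"
      hence "prob_measure Q" using assms(2) by auto
      hence nn: "\<forall>w. 0 \<le> Q w" and s1: "(\<Sum>w\<in>UNIV. Q w) = 1" unfolding prob_measure_def by auto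
      have le1: "Q w \<le> 1" for w
      proof -
        have "Q w \<le> (\<Sum>w\<in>UNIV. Q w)" by (rule member_le_sum) (use nn in auto)
        thus ?thesis using s1 by simp
      qed
      have "expect Q (V1 M r S1 h) \<le> (\<Sum>w\<in>UNIV. \<bar>V1 M r S1 h w\<bar>)"
        unfolding expect_def
      proof (rule sum_mono)
        fix w :: 'w
        have "Q w * V1 M r S1 h w \<le> \<bar>Q w * V1 M r S1 h w\<bar>" by simp
        also have "\<dots> = Q w * \<bar>V1 M r S1 h w\<bar>" using nn by (simp add: abs_mult)
        also have "\<dots> \<le> \<bar>V1 M r S1 h w\<bar>" using le1[of w] nn by (simp add: mult_left_le_one_le)
        finally show "Q w * V1 M r S1 h w \<le> \<bar>V1 M r S1 h w\<bar>" .
      qed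
      thus "expect Q (V1 M r S1 h) \<le> B" unfolding B_def .
    qed
    have "expect P (V1 M r S1 h) \<le> (SUP P\<in>\<P>. expect P (V1 M r S1 h))"
      by (rule cSUP_upper[OF P bdd])
    hence "arbitrage_MU \<P> M r S0 S1 h"
      unfolding arbitrage_MU_def using v0 v1 pos epos by (auto intro: less_imp_le)
    thus False using assms(6) adm unfolding no_arbitrage_MU_def by auto
  qed
  let ?Q = "range \<delta>"
  have "weak_risk_neutral ?Q M r S0 S1"
    unfolding weak_risk_neutral_def
  proof (intro conjI ballI allI)
    show "range \<delta> \<noteq> {}" by simp
    show "prob_measure Q" if "Q \<in> range \<delta>" for Q using that pm by auto
    show "(SUP Q\<in>range \<delta>. Q w) > 0" for w
    proof -
      have bdd: "bdd_above ((\<lambda>Q. Q w) ` range \<delta>)"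
        by (rule bdd_aboveI2[where M=1]) (auto simp: \<delta>_def)
      have "\<delta> w w \<le> (SUP Q\<in>range \<delta>. Q w)" by (rule cSUP_upper[OF _ bdd]) auto
      thus ?thesis by (simp add: \<delta>_def)
    qed
    show "(INF Q\<in>range \<delta>. expect Q (dS r S0 S1 m)) \<le> 0" if m: "m \<in> {1..M}" for m
    proof -
      obtain w where w: "dS r S0 S1 m w \<le> 0" using neg[OF m] by auto
      have fin: "finite ((\<lambda>Q. expect Q (dS r S0 S1 m)) ` range \<delta>)" by simp
      have "(INF Q\<in>range \<delta>. expect Q (dS r S0 S1 m)) \<le> expect (\<delta> w) (dS r S0 S1 m)"
        by (rule cINF_lower[OF bdd_below_finite[OF fin]]) auto
      thus ?thesis using w expd by simp
    qed
  qed
  thus ?thesis by blast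
qed

end
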